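(* Let $\Phi$ be a real, additive gain graph on $V=\{1,\dots,n\}$ and suppose $\mathbf{Q}=(Q_1,\dots,Q_n)\in(\mathbb{E}^d)^n$ has ideal general position. Let $s$ be a flat of $\mathcal{H}(\Phi;\mathbf{Q})$ that is not a point. Then for $i,j\in V$, $\mathrm{proj}_s Q_i=\mathrm{proj}_s Q_j$ if and only if $i$ and $j$ lie in the same connected component of $(V,E(s))$.
   Context: A real, additive gain graph $\Phi$ on $V$: finite graph with edge set $E$ (multiple edges allowed, every edge with two distinct endpoints) and gains $\phi(e;i,j)\in\mathbb{R}$ with $\phi(e;j,i)=-\phi(e;i,j)$. With $\psi_{ij}(P)=d(P,Q_i)^2-d(P,Q_j)^2$, $\mathcal{H}(\Phi;\mathbf{Q})$ consists of hyperplanes $h(e)=\{P:\psi_{ij}(P)=\phi(e;i,j)\}$ for edges $e$ with endpoints $i,j$. A flat of $\mathcal{H}$ is a nonempty intersection of a subset of $\mathcal{H}$; $E(s)=\{e\in E:h(e)\supseteq s\}$. $\mathrm{proj}_s P$ is the orthogonal projection of $P$ onto $s$. Ideal general position: the points are distinct and, with $\mathbb{E}^d\subset\mathbb{P}^d$, $h_\infty$ the ideal hyperplane and $p_{ij}$ the ideal point of line $Q_iQ_j$, for every set $T$ of unordered pairs the projective span of $\{p_{ij}:\{i,j\}\in T\}$ has dimension $\min(n-c(T),d)-1$, where $c(T)$ is the number of components of $(\{1,\dots,n\},T)$, isolated vertices included. *)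

theory Defs
  imports "HOL-Analysis.Analysis"
begin

text \<open>A real additive gain graph on V = {1..n}: a finite edge set E (of an arbitrary edge type),
  each edge e with an ordered pair of distinct endpoints ends e = (i,j) in V, and gain
  gain e = phi(e;i,j); the reverse orientation has gain phi(e;j,i) = - gain e.\<close>

definition gain_graph :: "nat \<Rightarrow> 'e set \<Rightarrow> ('e \<Rightarrow> nat \<times> nat) \<Rightarrow> bool" where
  "gain_graph n E ends \<longleftrightarrow> finite E \<and>
     (\<forall>e\<in>E. fst (ends e) \<in> {1..n} \<and> snd (ends e) \<in> {1..n} \<and> fst (ends e) \<noteq> snd (ends e))"

definition psi :: "(nat \<Rightarrow> 'a::euclidean_space) \<Rightarrow> nat \<Rightarrow> nat \<Rightarrow> 'a \<Rightarrow> real" where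
  "psi Q i j P = (dist P (Q i))\<^sup>2 - (dist P (Q j))\<^sup>2"

definition hyp :: "(nat \<Rightarrow> 'a::euclidean_space) \<Rightarrow> ('e \<Rightarrow> nat \<times> nat) \<Rightarrow> ('e \<Rightarrow> real) \<Rightarrow> 'e \<Rightarrow> 'a set" where
  "hyp Q ends gain e = {P. psi Q (fst (ends e)) (snd (ends e)) P = gain e}"

definition is_flat :: "(nat \<Rightarrow> 'a::euclidean_space) \<Rightarrow> 'e set \<Rightarrow> ('e \<Rightarrow> nat \<times> nat) \<Rightarrow> ('e \<Rightarrow> real) \<Rightarrow> 'a set \<Rightarrow> bool" where
  "is_flat Q E ends gain s \<longleftrightarrow> s \<noteq> {} \<and>
     (\<exists>F\<subseteq>E. s = (\<Inter>e\<in>F. hyp Q ends gain e))"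

definition edges_of :: "(nat \<Rightarrow> 'a::euclidean_space) \<Rightarrow> 'e set \<Rightarrow> ('e \<Rightarrow> nat \<times> nat) \<Rightarrow> ('e \<Rightarrow> real) \<Rightarrow> 'a set \<Rightarrow> 'e set" where
  "edges_of Q E ends gain s = {e\<in>E. s \<subseteq> hyp Q ends gain e}"

definition adj :: "'e set \<Rightarrow> ('e \<Rightarrow> nat \<times> nat) \<Rightarrow> (nat \<times> nat) set" where
  "adj F ends = {(a,b). \<exists>e\<in>F. ends e = (a,b) \<or> ends e = (b,a)}"

definition same_component :: "'e set \<Rightarrow> ('e \<Rightarrow> nat \<times> nat) \<Rightarrow> nat \<Rightarrow> nat \<Rightarrow> bool" where
  "same_component F ends i j \<longleftrightarrow> (i, j) \<in> (adj F ends)\<^sup>*"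

definition num_components :: "nat \<Rightarrow> nat set set \<Rightarrow> nat" where
  "num_components n T = card ({1..n} // ({(a,b). {a,b} \<in> T})\<^sup>*)"

text \<open>The ideal point p_ij of line Q_iQ_j is the direction class of Q_i - Q_j,
  so the projective span of {p_ij : {i,j} \<in> T} has projective dimension
  dim(span{Q_i - Q_j : {i,j}\<in>T}) - 1.  The condition is thus that this linear dimension equals
  min(n - c(T), d).\<close>
definition ideal_general_position :: "nat \<Rightarrow> (nat \<Rightarrow> 'a::euclidean_space) \<Rightarrow> bool" where
  "ideal_general_position n Q \<longleftrightarrow> inj_on Q {1..n} \<and>
     (\<forall>T. T \<subseteq> {{i,j} | i j. i \<in> {1..n} \<and> j \<in> {1..n} \<and> i \<noteq> j} \<longrightarrow>
        dim {Q i - Q j | i j. {i,j} \<in> T \<and> i \<noteq> j} = min (n - num_components n T) DIM('a))"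

end

theory Submission
  imports Defs
begin

lemma psi_lin:
  "psi Q a b P = -2 * (P \<bullet> (Q a - Q b)) + (Q a \<bullet> Q a - Q b \<bullet> Q b)"
  unfolding psi_def dist_norm power2_norm_eq_inner
  by (simp add: inner_diff_left inner_diff_right inner_commute algebra_simps)

lemma hyp_eq:
  "hyp Q ends gain e = {P. (Q (fst (ends e)) - Q (snd (ends e))) \<bullet> P =
     (Q (fst (ends e)) \<bullet> Q (fst (ends e)) - Q (snd (ends e)) \<bullet> Q (snd (ends e)) - gain e) / 2}"
  unfolding hyp_def psi_lin by (auto simp: inner_commute algebra_simps)

lemma card_quot_le: "card ({1..n::nat} // R) \<le> n"
proof -
  have "{1..n} // R = (\<lambda>x. R``{x}) ` {1..n}" unfolding quotient_def by auto
  then show ?thesis using card_image_le[of "{1..n::nat}" "\<lambda>x. R``{x}"] by simp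
qed

lemma card_quot_less:
  fixes X X' :: "(nat \<times> nat) set"
  assumes "X \<subseteq> X'" "sym X'" "(i,j) \<in> X'" "(i,j) \<notin> X\<^sup>*"
    and "i \<in> {1..n}" "j \<in> {1..n}"
  shows "card ({1..n} // X'\<^sup>*) < card ({1..n::nat} // X\<^sup>*)"
proof -
  let ?R = "X\<^sup>*" and ?R' = "X'\<^sup>*"
  define f where "f C = ?R' `` C" for C
  have RR: "?R \<subseteq> ?R'" using assms(1) by (rule rtrancl_mono)
  have symR': "sym ?R'" using assms(2) by (rule sym_rtrancl)
  have fx: "f (?R``{x}) = ?R'``{x}" for x
  proof
    show "f (?R``{x}) \<subseteq> ?R'``{x}" unfolding f_def using RR
      by (auto intro: rtrancl_trans)
    show "?R'``{x} \<subseteq> f (?R``{x})" unfolding f_def by auto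
  qed
  have q: "{1..n} // ?R = (\<lambda>x. ?R``{x}) ` {1..n}" unfolding quotient_def by auto
  have q': "{1..n} // ?R' = (\<lambda>x. ?R'``{x}) ` {1..n}" unfolding quotient_def by auto
  have img: "{1..n} // ?R' = f ` ({1..n} // ?R)"
    unfolding q q' image_image fx by simp
  have ne: "?R``{i} \<noteq> ?R``{j}" using assms(4) by auto
  have ij: "(i,j) \<in> ?R'" "(j,i) \<in> ?R'" using assms(3) symR'
    by (auto simp: sym_def)
  have eq: "?R'``{i} = ?R'``{j}" using ij by (auto intro: rtrancl_trans)
  have ninj: "\<not> inj_on f ({1..n} // ?R)"
  proof
    assume "inj_on f ({1..n} // ?R)"
    moreover have "?R``{i} \<in> {1..n} // ?R" "?R``{j} \<in> {1..n} // ?R"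
      using assms(5,6) unfolding q by auto
    ultimately show False using ne eq fx by (metis inj_on_def)
  qed
  have fin: "finite ({1..n} // ?R)" unfolding q by simp
  have "card (f ` ({1..n} // ?R)) \<le> card ({1..n} // ?R)" by (rule card_image_le[OF fin])
  moreover have "card (f ` ({1..n} // ?R)) \<noteq> card ({1..n} // ?R)"
    using ninj inj_on_iff_eq_card[OF fin] by blast
  ultimately show ?thesis using img by simp
qed

theorem corollary6p16:
  fixes n :: nat and Q :: "nat \<Rightarrow> 'a::euclidean_space"
    and E :: "'e set" and ends :: "'e \<Rightarrow> nat \<times> nat" and gain :: "'e \<Rightarrow> real"
    and s :: "'a set" and i j :: nat
  assumes "gain_graph n E ends"
    and "ideal_general_position n Q"
    and "is_flat Q E ends gain s"
    and "\<not> (\<exists>p. s = {p})"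
    and "i \<in> {1..n}" and "j \<in> {1..n}"
  shows "closest_point s (Q i) = closest_point s (Q j) \<longleftrightarrow>
         same_component (edges_of Q E ends gain s) ends i j"
proof -
  define S' where "S' = edges_of Q E ends gain s"
  define N where "N e = Q (fst (ends e)) - Q (snd (ends e))" for e
  define perp where "perp v \<longleftrightarrow> (\<forall>e\<in>S'. v \<bullet> N e = 0)" for v
  obtain F where F: "F \<subseteq> E" "s = (\<Inter>e\<in>F. hyp Q ends gain e)" and sne: "s \<noteq> {}"
    using assms(3) unfolding is_flat_def by blast
  have FS: "F \<subseteq> S'" using F unfolding S'_def edges_of_def by auto
  have hypN: "P \<in> hyp Q ends gain e \<longleftrightarrow> N e \<bullet> P =
     (Q (fst (ends e)) \<bullet> Q (fst (ends e)) - Q (snd (ends e)) \<bullet> Q (snd (ends e)) - gain e) / 2" for P e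
    unfolding hyp_eq N_def by simp
  have A: "perp (p - q)" if "p \<in> s" "q \<in> s" for p q
    unfolding perp_def
  proof
    fix e assume "e \<in> S'"
    then have "p \<in> hyp Q ends gain e" "q \<in> hyp Q ends gain e"
      using that unfolding S'_def edges_of_def by auto
    then have "N e \<bullet> p = N e \<bullet> q" unfolding hypN by simp
    then show "(p - q) \<bullet> N e = 0" by (simp add: inner_diff_left inner_diff_right inner_commute)
  qed
  have B: "p + v \<in> s" if "p \<in> s" "perp v" for p v
  proof -
    have "p + v \<in> hyp Q ends gain e" if "e \<in> F" for e
    proof -
      have "p \<in> hyp Q ends gain e" using \<open>p \<in> s\<close> F(2) that by auto
      moreover have "v \<bullet> N e = 0" using \<open>perp v\<close> FS that unfolding perp_def by auto
      ultimately show ?thesis unfolding hypN by (simp add: inner_add_right inner_commute)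
    qed
    then show ?thesis using F(2) by auto
  qed
  have perp_neg: "perp (- v)" if "perp v" for v using that unfolding perp_def by simp
  have hc: "closed (hyp Q ends gain e)" for e unfolding hyp_eq by (rule closed_hyperplane)
  have hv: "convex (hyp Q ends gain e)" for e unfolding hyp_eq by (rule convex_hyperplane)
  have clo: "closed s" unfolding F(2) using hc by (intro closed_Inter) auto
  have cvx: "convex s" unfolding F(2) using hv by (intro convex_Inter) auto
  have orth: "(x - closest_point s x) \<bullet> v = 0" if "perp v" for x v
  proof -
    let ?y = "closest_point s x"
    have y: "?y \<in> s" by (rule closest_point_in_set[OF clo sne])
    have m: "\<forall>z\<in>s. dist x ?y \<le> dist x z" using closest_point_exists(2)[OF clo sne] by blast
    have "?y + v \<in> s" "?y + (- v) \<in> s" using B[OF y that] B[OF y perp_neg[OF that]] by auto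
    from any_closest_point_dot[OF cvx clo y this(1) m] any_closest_point_dot[OF cvx clo y this(2) m]
    show ?thesis by (simp add: inner_minus_right)
  qed
  have path: "(Q a - Q b) \<bullet> v = 0" if "(a,b) \<in> (adj S' ends)\<^sup>*" "perp v" for a b v
    using that(1)
  proof (induction rule: rtrancl_induct)
    case base then show ?case by simp
  next
    case (step b c)
    then obtain e where e: "e \<in> S'" "ends e = (b,c) \<or> ends e = (c,b)"
      unfolding adj_def by auto
    have "N e \<bullet> v = 0" using \<open>perp v\<close> e(1) unfolding perp_def by (simp add: inner_commute)
    then have "(Q b - Q c) \<bullet> v = 0" using e(2) unfolding N_def
      by (auto simp: inner_diff_left)
    then show ?case using step.IH by (simp add: inner_diff_left)
  qed
  show ?thesis
  proof
    assume "same_component (edges_of Q E ends gain s) ends i j"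
    then have ij: "(i,j) \<in> (adj S' ends)\<^sup>*" unfolding same_component_def S'_def .
    let ?y = "closest_point s (Q i)"
    have y: "?y \<in> s" by (rule closest_point_in_set[OF clo sne])
    have "\<forall>z\<in>s. dist (Q j) ?y \<le> dist (Q j) z"
    proof
      fix z assume z: "z \<in> s"
      have pz: "perp (?y - z)" using A y z by blast
      have 1: "(Q i - Q j) \<bullet> (?y - z) = 0" using path[OF ij pz] .
      have 2: "(Q i - ?y) \<bullet> (?y - z) = 0" using orth[OF pz] .
      have 3: "(Q j - ?y) \<bullet> (?y - z) = 0" using 1 2
        by (simp add: inner_diff_left)
      have "(dist (Q j) z)\<^sup>2 = (dist (Q j) ?y)\<^sup>2 + (norm (?y - z))\<^sup>2"
      proof -
        have "Q j - z = (Q j - ?y) + (?y - z)" by simp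
        then have "(norm (Q j - z))\<^sup>2 = (norm ((Q j - ?y) + (?y - z)))\<^sup>2" by simp
        also have "\<dots> = (norm (Q j - ?y))\<^sup>2 + (norm (?y - z))\<^sup>2 + 2 * ((Q j - ?y) \<bullet> (?y - z))"
          unfolding power2_norm_eq_inner inner_add_left inner_add_right
          by (simp add: inner_commute[of "?y - z" "Q j - ?y"])
        finally have "(norm (Q j - z))\<^sup>2 = (norm (Q j - ?y))\<^sup>2 + (norm (?y - z))\<^sup>2 + 2 * ((Q j - ?y) \<bullet> (?y - z))" .
        then show ?thesis using 3 by (simp add: dist_norm)
      qed
      then have "(dist (Q j) ?y)\<^sup>2 \<le> (dist (Q j) z)\<^sup>2" by simp
      then show "dist (Q j) ?y \<le> dist (Q j) z" by (simp add: power2_le_iff_abs_le)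
    qed
    then show "closest_point s (Q i) = closest_point s (Q j)"
      by (rule closest_point_unique[OF cvx clo y])
  next
    assume eqc: "closest_point s (Q i) = closest_point s (Q j)"
    show "same_component (edges_of Q E ends gain s) ends i j"
    proof (rule ccontr)
      assume nc: "\<not> ?thesis"
      then have nij: "(i,j) \<notin> (adj S' ends)\<^sup>*" unfolding same_component_def S'_def by simp
      then have ineq: "i \<noteq> j" by auto
      define T where "T = {{fst (ends e), snd (ends e)} | e. e \<in> S'}"
      define T' where "T' = insert {i,j} T"
      define B where "B = {Q a - Q b | a b. {a,b} \<in> T \<and> a \<noteq> b}"
      define B' where "B' = {Q a - Q b | a b. {a,b} \<in> T' \<and> a \<noteq> b}"
      define rel where "rel U = {(a,b). {a,b} \<in> U}" for U :: "nat set set"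
      have gg: "\<forall>e\<in>E. fst (ends e) \<in> {1..n} \<and> snd (ends e) \<in> {1..n} \<and> fst (ends e) \<noteq> snd (ends e)"
        using assms(1) unfolding gain_graph_def by blast
      have S'E: "S' \<subseteq> E" unfolding S'_def edges_of_def by auto
      let ?P = "{{i,j} | i j. i \<in> {1..n} \<and> j \<in> {1..n} \<and> i \<noteq> j}"
      have TP: "T \<subseteq> ?P" using gg S'E unfolding T_def by blast
      have T'P: "T' \<subseteq> ?P" using TP assms(5,6) ineq unfolding T'_def by blast
      have dimB: "dim B = min (n - num_components n T) DIM('a)"
        using assms(2) TP unfolding ideal_general_position_def B_def by blast
      have dimB': "dim B' = min (n - num_components n T') DIM('a)"
        using assms(2) T'P unfolding ideal_general_position_def B'_def by blast
      have Bperp: "perp v" if "\<And>w. w \<in> B \<Longrightarrow> w \<bullet> v = 0" for v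
        unfolding perp_def
      proof
        fix e assume e: "e \<in> S'"
        then have "N e \<in> B" unfolding B_def T_def N_def using gg S'E by blast
        then have "N e \<bullet> v = 0" by (rule that)
        then show "v \<bullet> N e = 0" by (simp add: inner_commute)
      qed
      have perpB: "w \<bullet> v = 0" if "perp v" "w \<in> B" for v w
      proof -
        obtain a b e where w: "w = Q a - Q b" "{a,b} = {fst (ends e), snd (ends e)}" "e \<in> S'"
          using \<open>w \<in> B\<close> unfolding B_def T_def by blast
        have "N e \<bullet> v = 0" using that(1) w(3) unfolding perp_def by (simp add: inner_commute)
        then show ?thesis using w(1,2) unfolding N_def
          by (auto simp: doubleton_eq_iff inner_diff_left)
      qed
      obtain p q where pq: "p \<in> s" "q \<in> s" "p \<noteq> q" using sne assms(4) by blast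
      have "span B \<noteq> UNIV"
      proof
        assume "span B = UNIV"
        have "orthogonal (p - q) w" if "w \<in> B" for w
          using perpB[OF A[OF pq(1,2)] that] by (simp add: orthogonal_def inner_commute)
        then have "orthogonal (p - q) (p - q)"
          using orthogonal_to_span \<open>span B = UNIV\<close> by blast
        then show False using pq(3) by (simp add: orthogonal_def)
      qed
      then have dlt: "dim B < DIM('a)" using dim_eq_full[of B] dim_subset_UNIV[of B] by simp
      have relT: "rel T \<subseteq> adj S' ends"
        unfolding rel_def T_def adj_def by (auto simp: doubleton_eq_iff)
      have nrel: "(i,j) \<notin> (rel T)\<^sup>*" using nij rtrancl_mono[OF relT] by blast
      have cT: "num_components n T' < num_components n T"
        unfolding num_components_def
        using card_quot_less[of "rel T" "rel T'" i j n] nrel assms(5,6)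
        unfolding rel_def T'_def by (auto simp: sym_def insert_commute)
      have cle: "num_components n T \<le> n" unfolding num_components_def by (rule card_quot_le)
      have notin: "Q i - Q j \<notin> span B"
      proof
        assume inB: "Q i - Q j \<in> span B"
        have "B' \<subseteq> span B"
        proof
          fix w assume "w \<in> B'"
          then obtain a b where w: "w = Q a - Q b" "{a,b} \<in> T'" "a \<noteq> b" unfolding B'_def by blast
          show "w \<in> span B"
          proof (cases "{a,b} = {i,j}")
            case True
            then have "w = Q i - Q j \<or> w = - (Q i - Q j)" using w by (auto simp: doubleton_eq_iff)
            then show ?thesis using inB span_neg[OF inB] by (auto simp: minus_diff_eq)
          next
            case False
            then have "w \<in> B" using w unfolding T'_def B_def by blast
            then show ?thesis by (simp add: span_base)
          qed
        qed
        then have "dim B' \<le> dim B"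
          by (metis dim_span dim_subset)
        then show False using dimB dimB' dlt cT cle by linarith
      qed
      obtain y z where yz: "y \<in> span B" "\<And>w. w \<in> span B \<Longrightarrow> orthogonal z w" "Q i - Q j = y + z"
        using orthogonal_subspace_decomp_exists[of B "Q i - Q j"] by blast
      have zne: "z \<noteq> 0" using notin yz by auto
      have zy: "z \<bullet> y = 0" using yz(2)[OF yz(1)] by (simp add: orthogonal_def)
      have pz: "perp z"
        by (rule Bperp) (use yz(2) span_base in \<open>auto simp: orthogonal_def inner_commute\<close>)
      have "(Q i - Q j) \<bullet> z = z \<bullet> z" using yz(3) zy by (simp add: inner_add_left inner_add_right inner_commute)
      then have ne0: "(Q i - Q j) \<bullet> z \<noteq> 0" using zne by simp
      have "(Q i - closest_point s (Q i)) \<bullet> z = 0" "(Q j - closest_point s (Q j)) \<bullet> z = 0"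
        using orth[OF pz] by auto
      then have "(Q i - Q j) \<bullet> z = 0" using eqc by (simp add: inner_diff_left)
      then show False using ne0 by simp
    qed
  qed
qed

end
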